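(* Let $U\colon[0,1]^2\to[0,1]$ be a uninorm with neutral element $e\in(0,1)$, $U\in\mathcal U$, and let $c\in[0,1]$ be an idempotent element of $U$. If $a,b$ are idempotent elements of $U$ such that $U(x,x)\ne x$ for all $x\in(a,b)$, then either $U(c,x)=\min(x,c)$ for all $x\in(a,b)$, or $U(c,x)=\max(x,c)$ for all $x\in(a,b)$. Moreover, if $U$ on $[a,b]^2$ is a nilpotent t-norm (resp. nilpotent t-conorm), then either $U(c,x)=\min(x,c)$ for all $x\in[a,b)$ (resp. $x\in(a,b]$) or $U(c,x)=\max(x,c)$ for all $x\in[a,b)$ (resp. $x\in(a,b]$).
   Context: A uninorm is a commutative, associative binary operation on $[0,1]$, non-decreasing in each variable, with a neutral element $e$. Underlying t-norm $T_U(x,y)=U(ex,ey)/e$, underlying t-conorm $C_U(x,y)=(U(e+(1-e)x,e+(1-e)y)-e)/(1-e)$; $\mathcal U$ is the class of uninorms for which both are continuous. An idempotent element is $x$ with $U(x,x)=x$. "$U$ on $[a,b]^2$ is a nilpotent t-norm (t-conorm)" means that the restriction of $U$ to $[a,b]^2$, transported to $[0,1]^2$ by the increasing linear bijection $[a,b]\to[0,1]$, is a nilpotent t-norm (t-conorm), i.e. a continuous t-norm with only idempotents $0,1$ and $T(x,y)=0$ for some $x,y\in(0,1)$ (resp. a continuous t-conorm with only idempotents $0,1$ and $S(x,y)=1$ for some $x,y\in(0,1)$). *)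

theory Defs
  imports "HOL-Analysis.Analysis"
begin

text \<open>Binary operations on [0,1] are modelled as functions real => real => real;
  only their values on the unit square matter.\<close>

definition uninorm :: "(real \<Rightarrow> real \<Rightarrow> real) \<Rightarrow> real \<Rightarrow> bool" where
  "uninorm U e \<longleftrightarrow> e \<in> {0..1} \<and>
     (\<forall>x\<in>{0..1}. \<forall>y\<in>{0..1}. U x y \<in> {0..1}) \<and>
     (\<forall>x\<in>{0..1}. \<forall>y\<in>{0..1}. U x y = U y x) \<and>
     (\<forall>x\<in>{0..1}. \<forall>y\<in>{0..1}. \<forall>z\<in>{0..1}. U (U x y) z = U x (U y z)) \<and>
     (\<forall>x\<in>{0..1}. \<forall>x'\<in>{0..1}. \<forall>y\<in>{0..1}. x \<le> x' \<longrightarrow> U x y \<le> U x' y) \<and>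
     (\<forall>x\<in>{0..1}. U e x = x)"

definition underlying_tnorm :: "(real \<Rightarrow> real \<Rightarrow> real) \<Rightarrow> real \<Rightarrow> real \<Rightarrow> real \<Rightarrow> real" where
  "underlying_tnorm U e x y = U (e * x) (e * y) / e"

definition underlying_tconorm :: "(real \<Rightarrow> real \<Rightarrow> real) \<Rightarrow> real \<Rightarrow> real \<Rightarrow> real \<Rightarrow> real" where
  "underlying_tconorm U e x y = (U (e + (1 - e) * x) (e + (1 - e) * y) - e) / (1 - e)"

definition class_U :: "(real \<Rightarrow> real \<Rightarrow> real) \<Rightarrow> real \<Rightarrow> bool" where
  "class_U U e \<longleftrightarrow> uninorm U e \<and>
     continuous_on ({0..1} \<times> {0..1}) (\<lambda>(x, y). underlying_tnorm U e x y) \<and>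
     continuous_on ({0..1} \<times> {0..1}) (\<lambda>(x, y). underlying_tconorm U e x y)"

definition idempotent_elem :: "(real \<Rightarrow> real \<Rightarrow> real) \<Rightarrow> real \<Rightarrow> bool" where
  "idempotent_elem U x \<longleftrightarrow> x \<in> {0..1} \<and> U x x = x"

definition tnorm :: "(real \<Rightarrow> real \<Rightarrow> real) \<Rightarrow> bool" where
  "tnorm T \<longleftrightarrow> uninorm T 1"

definition tconorm :: "(real \<Rightarrow> real \<Rightarrow> real) \<Rightarrow> bool" where
  "tconorm S \<longleftrightarrow> uninorm S 0"

definition nilpotent_tnorm :: "(real \<Rightarrow> real \<Rightarrow> real) \<Rightarrow> bool" where
  "nilpotent_tnorm T \<longleftrightarrow> tnorm T \<and>
     continuous_on ({0..1} \<times> {0..1}) (\<lambda>(x, y). T x y) \<and>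
     (\<forall>x\<in>{0..1}. T x x = x \<longrightarrow> x = 0 \<or> x = 1) \<and>
     (\<exists>x\<in>{0<..<1}. \<exists>y\<in>{0<..<1}. T x y = 0)"

definition nilpotent_tconorm :: "(real \<Rightarrow> real \<Rightarrow> real) \<Rightarrow> bool" where
  "nilpotent_tconorm S \<longleftrightarrow> tconorm S \<and>
     continuous_on ({0..1} \<times> {0..1}) (\<lambda>(x, y). S x y) \<and>
     (\<forall>x\<in>{0..1}. S x x = x \<longrightarrow> x = 0 \<or> x = 1) \<and>
     (\<exists>x\<in>{0<..<1}. \<exists>y\<in>{0<..<1}. S x y = 1)"

text \<open>Restriction of U to [a,b]^2 transported to [0,1]^2 by the increasing linear bijection.\<close>
definition transport :: "(real \<Rightarrow> real \<Rightarrow> real) \<Rightarrow> real \<Rightarrow> real \<Rightarrow> real \<Rightarrow> real \<Rightarrow> real" where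
  "transport U a b x y = (U (a + (b - a) * x) (a + (b - a) * y) - a) / (b - a)"

definition nilpotent_tnorm_on :: "(real \<Rightarrow> real \<Rightarrow> real) \<Rightarrow> real \<Rightarrow> real \<Rightarrow> bool" where
  "nilpotent_tnorm_on U a b \<longleftrightarrow> a < b \<and> nilpotent_tnorm (transport U a b)"

definition nilpotent_tconorm_on :: "(real \<Rightarrow> real \<Rightarrow> real) \<Rightarrow> real \<Rightarrow> real \<Rightarrow> bool" where
  "nilpotent_tconorm_on U a b \<longleftrightarrow> a < b \<and> nilpotent_tconorm (transport U a b)"

end

theory Submission
  imports Defs
begin

locale unc =
  fixes U :: "real \<Rightarrow> real \<Rightarrow> real" and e :: real
  assumes un: "uninorm U e" and e0: "0 < e" and e1: "e < 1"
    and cL: "continuous_on ({0..e}\<times>{0..e}) (\<lambda>(x,y). U x y)"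
    and cR: "continuous_on ({e..1}\<times>{e..1}) (\<lambda>(x,y). U x y)"
begin

lemma cl: "x \<in> {0..1} \<Longrightarrow> y \<in> {0..1} \<Longrightarrow> U x y \<in> {0..1}"
  using un unfolding uninorm_def by blast
lemma comm: "x \<in> {0..1} \<Longrightarrow> y \<in> {0..1} \<Longrightarrow> U x y = U y x"
  using un unfolding uninorm_def by blast
lemma assoc: "x \<in> {0..1} \<Longrightarrow> y \<in> {0..1} \<Longrightarrow> z \<in> {0..1} \<Longrightarrow> U (U x y) z = U x (U y z)"
  using un unfolding uninorm_def by blast
lemma mono1: "x \<le> x' \<Longrightarrow> x \<in> {0..1} \<Longrightarrow> x' \<in> {0..1} \<Longrightarrow> y \<in> {0..1} \<Longrightarrow> U x y \<le> U x' y"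
  using un unfolding uninorm_def by blast
lemma mono2: "y \<le> y' \<Longrightarrow> x \<in> {0..1} \<Longrightarrow> y' \<in> {0..1} \<Longrightarrow> y \<in> {0..1} \<Longrightarrow> U x y \<le> U x y'"
  using mono1[of y y' x] comm by simp
lemma neut: "x \<in> {0..1} \<Longrightarrow> U e x = x"
  using un unfolding uninorm_def by blast
lemma neut2: "x \<in> {0..1} \<Longrightarrow> U x e = x"
  using neut[of x] comm[of x e] e0 e1 by simp

lemma contL1: "c \<in> {0..e} \<Longrightarrow> {l..r} \<subseteq> {0..e} \<Longrightarrow> continuous_on {l..r} (\<lambda>w. U c w)"
proof -
  assume c: "c \<in> {0..e}" and s: "{l..r} \<subseteq> {0..e}"
  have "continuous_on {l..r} (\<lambda>w. (\<lambda>(x,y). U x y) (c,w))"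
    by (rule continuous_on_compose2[OF cL]) (use c s in \<open>auto intro!: continuous_intros\<close>)
  then show ?thesis by simp
qed

lemma contR1: "c \<in> {e..1} \<Longrightarrow> {l..r} \<subseteq> {e..1} \<Longrightarrow> continuous_on {l..r} (\<lambda>w. U c w)"
proof -
  assume c: "c \<in> {e..1}" and s: "{l..r} \<subseteq> {e..1}"
  have "continuous_on {l..r} (\<lambda>w. (\<lambda>(x,y). U x y) (c,w))"
    by (rule continuous_on_compose2[OF cR]) (use c s in \<open>auto intro!: continuous_intros\<close>)
  then show ?thesis by simp
qed

lemma contRd: "continuous_on {e..1} (\<lambda>w. U w w)"
proof -
  have "continuous_on {e..1} (\<lambda>w. (\<lambda>(x,y). U x y) (w,w))"
    by (rule continuous_on_compose2[OF cR]) (auto intro!: continuous_intros)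
  then show ?thesis by simp
qed

lemma idem_low:
  assumes c: "c \<in> {0..e}" "U c c = c" and z: "z \<in> {0..e}"
  shows "U c z = min c z"
proof (cases "c \<le> z")
  case True
  have "U c z \<le> U c e" using mono2[of z e c] c z e0 e1 by auto
  also have "\<dots> = c" using neut2 c e1 by auto
  finally have "U c z \<le> c" .
  moreover have "U c c \<le> U c z" using mono2[of c z c] c z e1 True by auto
  ultimately show ?thesis using True c by auto
next
  case False
  have "U c 0 \<le> U e 0" using mono1[of c e 0] c e1 by auto
  also have "\<dots> = 0" using neut by auto
  finally have "U c 0 \<le> z" using z by auto
  moreover have "z \<le> U c c" using c False by auto
  moreover have "continuous_on {0..c} (\<lambda>w. U c w)" using contL1 c by auto
  ultimately obtain w where w: "0 \<le> w" "w \<le> c" "U c w = z"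
    using IVT'[of "\<lambda>w. U c w" 0 z c] c by auto
  have "U c z = U (U c c) w" using assoc[of c c w] w c e1 by auto
  also have "\<dots> = z" using c w by simp
  finally show ?thesis using False by simp
qed

lemma idem_high:
  assumes c: "c \<in> {e..1}" "U c c = c" and z: "z \<in> {e..1}"
  shows "U c z = max c z"
proof (cases "z \<le> c")
  case True
  have "U c z \<ge> U c e" using mono2[of e z c] c z e0 e1 by auto
  moreover have "U c e = c" using neut2 c e0 by auto
  moreover have "U c c \<ge> U c z" using mono2[of z c c] c z e0 True by auto
  ultimately show ?thesis using True c by auto
next
  case False
  have "U c 1 \<ge> U e 1" using mono1[of e c 1] c e0 by auto
  moreover have "U e 1 = 1" using neut by auto
  ultimately have "z \<le> U c 1" using z by auto
  moreover have "U c c \<le> z" using c False by auto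
  moreover have "continuous_on {c..1} (\<lambda>w. U c w)" using contR1 c by auto
  ultimately obtain w where w: "c \<le> w" "w \<le> 1" "U c w = z"
    using IVT'[of "\<lambda>w. U c w" c z 1] c by auto
  have "U c z = U (U c c) w" using assoc[of c c w] w c e0 by auto
  also have "\<dots> = z" using c w by simp
  finally show ?thesis using False by simp
qed

lemma absorb_up:
  assumes c: "c \<in> {0..1}" and v: "v \<in> {e..1}" "U c v = v" and y: "v \<le> y" "y \<le> 1"
  shows "U c y = y"
proof -
  have "U v 1 \<ge> U e 1" using mono1[of e v 1] v e0 by auto
  moreover have "U e 1 = 1" using neut by auto
  ultimately have "y \<le> U v 1" using y by auto
  moreover have "U v e \<le> y" using neut2 v y e0 by auto
  moreover have "continuous_on {e..1} (\<lambda>w. U v w)" using contR1 v by auto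
  ultimately obtain t where t: "e \<le> t" "t \<le> 1" "U v t = y"
    using IVT'[of "\<lambda>w. U v w" e y 1] e1 by auto
  have "U c y = U (U c v) t" using assoc[of c v t] t c v e0 by auto
  also have "\<dots> = y" using v t by simp
  finally show ?thesis .
qed

lemma dich:
  assumes c: "c \<in> {0..e}" "U c c = c" and y: "y \<in> {e..1}"
  shows "U c y = c \<or> U c y = y"
proof -
  define v where "v = U c y"
  have v01: "v \<in> {0..1}" unfolding v_def using cl c y e1 e0 by auto
  have "U c e \<le> v" unfolding v_def using mono2[of e y c] c y e1 by auto
  then have cv: "c \<le> v" using neut2 c e1 by auto
  have "v \<le> U e y" unfolding v_def using mono1[of c e y] c y e1 by auto
  then have vy: "v \<le> y" using neut y e0 by auto
  have fx: "U c v = v" unfolding v_def using assoc[of c c y] c y e1 e0 by auto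
  show ?thesis
  proof (cases "e \<le> v")
    case True
    then show ?thesis using absorb_up[of c v y] c v01 fx vy y e1 unfolding v_def by auto
  next
    case False
    then have "U c v = min c v" using idem_low[of c v] c v01 by auto
    then show ?thesis using fx cv unfolding v_def by auto
  qed
qed


lemma L_main:
  assumes c: "c \<in> {0..e}" "U c c = c" and ab: "e \<le> a" "a < b" "b \<le> 1"
    and noid: "\<forall>x\<in>{a<..<b}. U x x \<noteq> x"
  shows "(\<forall>x\<in>{a<..<b}. U c x = c) \<or> (\<forall>x\<in>{a<..<b}. U c x = x)"
proof (rule ccontr)
  assume "\<not> ?thesis"
  then obtain q p where q: "q \<in> {a<..<b}" "U c q \<noteq> c" and p: "p \<in> {a<..<b}" "U c p \<noteq> p"
    by auto
  have qF: "U c q = q" using dich[of c q] c q ab by auto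
  have pN: "U c p = c" using dich[of c p] c p ab by auto
  have pq: "p < q"
  proof (rule ccontr)
    assume "\<not> p < q"
    then have "U c p = p" using absorb_up[of c q p] c q qF p ab e0 by auto
    then show False using p by simp
  qed
  define F where "F = {s \<in> {p..q}. U c s = s}"
  define t where "t = Inf F"
  have Fne: "F \<noteq> {}" using qF pq unfolding F_def by auto
  have Fbdd: "bdd_below F" unfolding F_def by (rule bdd_belowI[of _ p]) auto
  have tp: "p \<le> t" unfolding t_def using Fne by (rule cInf_greatest) (auto simp: F_def)
  have tq: "t \<le> q" unfolding t_def using Fbdd qF pq by (intro cInf_lower) (auto simp: F_def)
  have above: "U c s = s" if ts: "t < s" "s \<le> 1" for s
  proof -
    obtain s' where "s' \<in> F" "s' < s" using cInf_less_iff[OF Fne Fbdd] ts unfolding t_def by auto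
    then show ?thesis using absorb_up[of c s' s] c ts ab p unfolding F_def by auto
  qed
  have t_ab: "t \<in> {a<..<b}" using tp tq p q by auto
  have closN: "U c (U s1 s2) = U c s2" if "U c s1 = c" "s1 \<in> {0..1}" "s2 \<in> {0..1}" for s1 s2
    using assoc[of c s1 s2] that c e1 by auto
  have "U e t \<le> U t t" using mono1[of e t t] t_ab ab e0 by auto
  then have "t \<le> U t t" using neut[of t] t_ab ab e0 by auto
  moreover have "U t t \<noteq> t" using noid t_ab by auto
  ultimately have ttt: "t < U t t" by auto
  have tt1: "U t t \<le> 1" using cl[of t t] t_ab ab e0 by auto
  have "U c t = c \<or> U c t = t" using dich[of c t] c t_ab ab by auto
  then show False
  proof
    assume "U c t = c"
    then have "U c (U t t) = c" using closN[of t t] t_ab ab e0 by auto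
    moreover have "U c (U t t) = U t t" using above ttt tt1 by auto
    ultimately show False using ttt t_ab ab c by auto
  next
    assume tF: "U c t = t"
    have tgp: "p < t" using tF pN tp p c ab by (cases "p = t") auto
    have "\<exists>d>0. \<forall>x'\<in>{e..1}. dist x' t < d \<longrightarrow> dist (U x' x') (U t t) < U t t - t"
      using contRd t_ab ab ttt unfolding continuous_on_iff by auto
    then obtain d where d: "d > 0" "\<And>x'. x' \<in> {e..1} \<Longrightarrow> dist x' t < d \<Longrightarrow> dist (U x' x') (U t t) < U t t - t"
      by blast
    define s where "s = max p (t - d/2)"
    have s: "p \<le> s" "s < t" using tgp d unfolding s_def by auto
    have "dist (U s s) (U t t) < U t t - t" using d s p t_ab ab unfolding s_def
      by (intro d(2)) (auto simp: dist_real_def)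
    then have sst: "t < U s s" by (auto simp: dist_real_def)
    have "s \<notin> F"
    proof
      assume "s \<in> F" then have "t \<le> s" unfolding t_def using Fbdd by (rule cInf_lower)
      then show False using s by simp
    qed
    then have "U c s \<noteq> s" using s tq unfolding F_def by auto
    then have "U c s = c" using dich[of c s] c s p ab t_ab by auto
    then have "U c (U s s) = c" using closN[of s s] s p ab e0 t_ab by auto
    moreover have "U c (U s s) = U s s" using above[of "U s s"] sst cl[of s s] s p ab e0 t_ab by auto
    ultimately show False using sst t_ab ab c by auto
  qed
qed

end

lemma unc_of_class:
  assumes "class_U U e" "0 < e" "e < 1"
  shows "unc U e"
proof -
  have un: "uninorm U e" and T: "continuous_on ({0..1} \<times> {0..1}) (\<lambda>(x, y). underlying_tnorm U e x y)"
    and S: "continuous_on ({0..1} \<times> {0..1}) (\<lambda>(x, y). underlying_tconorm U e x y)"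
    using assms(1) unfolding class_U_def by auto
  have h1: "continuous_on ({0..e}\<times>{0..e}) (\<lambda>z. (\<lambda>(x, y). underlying_tnorm U e x y) (fst z / e, snd z / e))"
    by (rule continuous_on_compose2[OF T]) (use assms in \<open>auto intro!: continuous_intros simp: field_simps\<close>)
  have h1': "continuous_on ({0..e}\<times>{0..e}) (\<lambda>z. e * (\<lambda>(x, y). underlying_tnorm U e x y) (fst z / e, snd z / e))"
    by (intro continuous_intros h1)
  have cL: "continuous_on ({0..e}\<times>{0..e}) (\<lambda>(x,y). U x y)"
    by (rule continuous_on_cong[OF refl, THEN iffD1, OF _ h1']) (use assms in \<open>auto simp: underlying_tnorm_def split: prod.splits\<close>)
  have h2: "continuous_on ({e..1}\<times>{e..1}) (\<lambda>z. (\<lambda>(x, y). underlying_tconorm U e x y) ((fst z - e) / (1 - e), (snd z - e) / (1 - e)))"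
    by (rule continuous_on_compose2[OF S]) (use assms in \<open>auto intro!: continuous_intros simp: field_simps\<close>)
  have h2': "continuous_on ({e..1}\<times>{e..1}) (\<lambda>z. e + (1 - e) * (\<lambda>(x, y). underlying_tconorm U e x y) ((fst z - e) / (1 - e), (snd z - e) / (1 - e)))"
    by (intro continuous_intros h2)
  have cR: "continuous_on ({e..1}\<times>{e..1}) (\<lambda>(x,y). U x y)"
    by (rule continuous_on_cong[OF refl, THEN iffD1, OF _ h2']) (use assms in \<open>auto simp: underlying_tconorm_def split: prod.splits\<close>)
  show ?thesis using un assms cL cR by unfold_locales auto
qed

lemma unc_dual:
  assumes "unc U e"
  shows "unc (\<lambda>x y. 1 - U (1 - x) (1 - y)) (1 - e)"
proof -
  interpret unc U e by fact
  have un': "uninorm (\<lambda>x y. 1 - U (1 - x) (1 - y)) (1 - e)"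
    unfolding uninorm_def
  proof (intro conjI ballI impI)
    show "1 - e \<in> {0..1}" using e0 e1 by auto
  next
    fix x y assume "x \<in> {0..1::real}" "y \<in> {0..1::real}"
    then show "1 - U (1 - x) (1 - y) \<in> {0..1}" using cl[of "1-x" "1-y"] by auto
  next
    fix x y assume "x \<in> {0..1::real}" "y \<in> {0..1::real}"
    then show "1 - U (1 - x) (1 - y) = 1 - U (1 - y) (1 - x)" using comm[of "1-x" "1-y"] by auto
  next
    fix x y z assume "x \<in> {0..1::real}" "y \<in> {0..1::real}" "z \<in> {0..1::real}"
    then show "1 - U (1 - (1 - U (1 - x) (1 - y))) (1 - z) = 1 - U (1 - x) (1 - (1 - U (1 - y) (1 - z)))"
      using assoc[of "1-x" "1-y" "1-z"] by auto
  next
    fix x x' y assume "x \<in> {0..1::real}" "x' \<in> {0..1::real}" "y \<in> {0..1::real}" "x \<le> x'"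
    then show "1 - U (1 - x) (1 - y) \<le> 1 - U (1 - x') (1 - y)"
      using mono1[of "1-x'" "1-x" "1-y"] by auto
  next
    fix x assume "x \<in> {0..1::real}"
    then show "1 - U (1 - (1 - e)) (1 - x) = x" using neut[of "1-x"] by auto
  qed
  have h1: "continuous_on ({0..1-e}\<times>{0..1-e}) (\<lambda>z. 1 - (\<lambda>(x,y). U x y) (1 - fst z, 1 - snd z))"
    by (intro continuous_intros continuous_on_compose2[OF cR]) auto
  have cL': "continuous_on ({0..1-e}\<times>{0..1-e}) (\<lambda>(x,y). 1 - U (1 - x) (1 - y))"
    by (rule continuous_on_cong[OF refl, THEN iffD1, OF _ h1]) (auto split: prod.splits)
  have h2: "continuous_on ({1-e..1}\<times>{1-e..1}) (\<lambda>z. 1 - (\<lambda>(x,y). U x y) (1 - fst z, 1 - snd z))"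
    by (intro continuous_intros continuous_on_compose2[OF cL]) auto
  have cR': "continuous_on ({1-e..1}\<times>{1-e..1}) (\<lambda>(x,y). 1 - U (1 - x) (1 - y))"
    by (rule continuous_on_cong[OF refl, THEN iffD1, OF _ h2]) (auto split: prod.splits)
  show ?thesis using un' cL' cR' e0 e1 by unfold_locales auto
qed


theorem lemma7:
  fixes U :: "real \<Rightarrow> real \<Rightarrow> real" and e a b c :: real
  assumes "class_U U e" and "0 < e" and "e < 1"
    and "idempotent_elem U c"
    and "idempotent_elem U a" and "idempotent_elem U b"
    and "\<forall>x\<in>{a<..<b}. U x x \<noteq> x"
  shows "((\<forall>x\<in>{a<..<b}. U c x = min x c) \<or> (\<forall>x\<in>{a<..<b}. U c x = max x c))
     \<and> (nilpotent_tnorm_on U a b \<longrightarrow>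
          (\<forall>x\<in>{a..<b}. U c x = min x c) \<or> (\<forall>x\<in>{a..<b}. U c x = max x c))
     \<and> (nilpotent_tconorm_on U a b \<longrightarrow>
          (\<forall>x\<in>{a<..b}. U c x = min x c) \<or> (\<forall>x\<in>{a<..b}. U c x = max x c))"
proof -
  interpret unc U e using unc_of_class assms(1-3) .
  have c: "c \<in> {0..1}" "U c c = c" using assms(4) unfolding idempotent_elem_def by auto
  have a: "a \<in> {0..1}" "U a a = a" using assms(5) unfolding idempotent_elem_def by auto
  have b: "b \<in> {0..1}" "U b b = b" using assms(6) unfolding idempotent_elem_def by auto
  have noid: "\<forall>x\<in>{a<..<b}. U x x \<noteq> x" by fact
  have inab: "a + (b - a) * x \<in> {a<..<b}" if "a < b" "x \<in> {0<..<1}" for x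
  proof -
    have "(b - a) * x > 0" using that by simp
    moreover have "(b - a) * x < (b - a) * 1" using that by (intro mult_strict_left_mono) auto
    ultimately show ?thesis by auto
  qed
  have ntn: "\<exists>X\<in>{a<..<b}. \<exists>Y\<in>{a<..<b}. U X Y = a" if "nilpotent_tnorm_on U a b"
  proof -
    from that have ab: "a < b" and "\<exists>x\<in>{0<..<1}. \<exists>y\<in>{0<..<1}. transport U a b x y = 0"
      unfolding nilpotent_tnorm_on_def nilpotent_tnorm_def by auto
    then obtain x y where xy: "x \<in> {0<..<1}" "y \<in> {0<..<1}" "transport U a b x y = 0" by blast
    then have "U (a + (b - a) * x) (a + (b - a) * y) = a" using ab unfolding transport_def by auto
    then show ?thesis using inab[OF ab xy(1)] inab[OF ab xy(2)] by blast
  qed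
  have ntc: "\<exists>X\<in>{a<..<b}. \<exists>Y\<in>{a<..<b}. U X Y = b" if "nilpotent_tconorm_on U a b"
  proof -
    from that have ab: "a < b" and "\<exists>x\<in>{0<..<1}. \<exists>y\<in>{0<..<1}. transport U a b x y = 1"
      unfolding nilpotent_tconorm_on_def nilpotent_tconorm_def by auto
    then obtain x y where xy: "x \<in> {0<..<1}" "y \<in> {0<..<1}" "transport U a b x y = 1" by blast
    then have "U (a + (b - a) * x) (a + (b - a) * y) = b" using ab unfolding transport_def by auto
    then show ?thesis using inab[OF ab xy(1)] inab[OF ab xy(2)] by blast
  qed
  have assoc3: "U c (U X Y) = U c Y" if "U c X = c" "X \<in> {0..1}" "Y \<in> {0..1}" for X Y
    using assoc[of c X Y] that c by auto
  show ?thesis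
  proof (cases "a < b")
    case False
    then show ?thesis unfolding nilpotent_tnorm_on_def nilpotent_tconorm_on_def by auto
  next
    case ab: True
    have "e \<le> a \<or> b \<le> e" using noid neut[of e] e0 e1 by force
    then show ?thesis
    proof
      assume ea: "e \<le> a"
      have notn: "\<not> nilpotent_tnorm_on U a b"
      proof
        assume "nilpotent_tnorm_on U a b"
        then obtain X Y where XY: "X \<in> {a<..<b}" "Y \<in> {a<..<b}" "U X Y = a" using ntn by blast
        have "U e Y \<le> U X Y" using mono1[of e X Y] XY ea a b e0 by auto
        then show False using XY neut[of Y] a b by auto
      qed
      show ?thesis
      proof (cases "c \<le> e")
        case ce: True
        have L: "(\<forall>x\<in>{a<..<b}. U c x = c) \<or> (\<forall>x\<in>{a<..<b}. U c x = x)"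
          using L_main[of c a b] c ce ea ab b noid by auto
        then show ?thesis
        proof
          assume h: "\<forall>x\<in>{a<..<b}. U c x = c"
          have 1: "\<forall>x\<in>{a<..<b}. U c x = min x c" using h ce ea by auto
          have 2: "nilpotent_tconorm_on U a b \<longrightarrow> (\<forall>x\<in>{a<..b}. U c x = min x c)"
          proof
            assume "nilpotent_tconorm_on U a b"
            then obtain X Y where XY: "X \<in> {a<..<b}" "Y \<in> {a<..<b}" "U X Y = b" using ntc by blast
            have "U c b = c" using assoc3[of X Y] XY h a b by auto
            then show "\<forall>x\<in>{a<..b}. U c x = min x c" using h ce ea ab by force
          qed
          show ?thesis using 1 2 notn by blast
        next
          assume h: "\<forall>x\<in>{a<..<b}. U c x = x"
          have 1: "\<forall>x\<in>{a<..<b}. U c x = max x c" using h ce ea by auto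
          define m where "m = (a + b) / 2"
          have m: "m \<in> {a<..<b}" using ab unfolding m_def by auto
          have "U c b = b" using absorb_up[of c m b] c m h ea b by auto
          then have 2: "\<forall>x\<in>{a<..b}. U c x = max x c" using h ce ea ab by force
          show ?thesis using 1 2 notn by blast
        qed
      next
        case ce: False
        have "\<forall>x\<in>{a..b}. U c x = max x c"
          using idem_high[of c] c ce ea b by (auto simp: max.commute)
        then show ?thesis by auto
      qed
    next
      assume be: "b \<le> e"
      have notc: "\<not> nilpotent_tconorm_on U a b"
      proof
        assume "nilpotent_tconorm_on U a b"
        then obtain X Y where XY: "X \<in> {a<..<b}" "Y \<in> {a<..<b}" "U X Y = b" using ntc by blast
        have "U X Y \<le> U e Y" using mono1[of X e Y] XY be a b e1 by auto
        then show False using XY neut[of Y] a b by auto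
      qed
      show ?thesis
      proof (cases "e \<le> c")
        case ce: True
        define D where "D = (\<lambda>x y. 1 - U (1 - x) (1 - y))"
        interpret d: unc D "1 - e" unfolding D_def by (rule unc_dual) unfold_locales
        have Dc: "D (1 - c) (1 - y) = 1 - U c y" for y unfolding D_def by simp
        have noidD: "\<forall>x\<in>{1-b<..<1-a}. D x x \<noteq> x"
        proof
          fix x assume x: "x \<in> {1-b<..<1-a}"
          then have "1 - x \<in> {a<..<b}" by auto
          then have "U (1 - x) (1 - x) \<noteq> 1 - x" using noid by blast
          then show "D x x \<noteq> x" unfolding D_def by auto
        qed
        have L: "(\<forall>x\<in>{1-b<..<1-a}. D (1 - c) x = 1 - c) \<or> (\<forall>x\<in>{1-b<..<1-a}. D (1 - c) x = x)"
          using d.L_main[of "1 - c" "1 - b" "1 - a"] c ce be ab a noidD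
          by (auto simp: D_def)
        have L': "(\<forall>x\<in>{a<..<b}. U c x = c) \<or> (\<forall>x\<in>{a<..<b}. U c x = x)"
        proof -
          have tr: "y \<in> {a<..<b} \<Longrightarrow> 1 - y \<in> {1-b<..<1-a}" for y by auto
          from L show ?thesis
          proof
            assume h: "\<forall>x\<in>{1-b<..<1-a}. D (1 - c) x = 1 - c"
            have "U c y = c" if "y \<in> {a<..<b}" for y using h[rule_format, OF tr[OF that]] Dc[of y] by simp
            then show ?thesis by blast
          next
            assume h: "\<forall>x\<in>{1-b<..<1-a}. D (1 - c) x = x"
            have "U c y = y" if "y \<in> {a<..<b}" for y using h[rule_format, OF tr[OF that]] Dc[of y] by simp
            then show ?thesis by blast
          qed
        qed
        then show ?thesis
        proof
          assume h: "\<forall>x\<in>{a<..<b}. U c x = c"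
          have 1: "\<forall>x\<in>{a<..<b}. U c x = max x c" using h ce be by auto
          have 2: "nilpotent_tnorm_on U a b \<longrightarrow> (\<forall>x\<in>{a..<b}. U c x = max x c)"
          proof
            assume "nilpotent_tnorm_on U a b"
            then obtain X Y where XY: "X \<in> {a<..<b}" "Y \<in> {a<..<b}" "U X Y = a" using ntn by blast
            have "U c a = c" using assoc3[of X Y] XY h a b by auto
            then show "\<forall>x\<in>{a..<b}. U c x = max x c" using h ce be ab by force
          qed
          show ?thesis using 1 2 notc by blast
        next
          assume h: "\<forall>x\<in>{a<..<b}. U c x = x"
          have 1: "\<forall>x\<in>{a<..<b}. U c x = min x c" using h ce be by auto
          define m where "m = (a + b) / 2"
          have m: "m \<in> {a<..<b}" using ab unfolding m_def by auto
          have "D (1 - c) (1 - m) = 1 - m" using Dc[of m] h m by simp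
          then have "D (1 - c) (1 - a) = 1 - a"
            using d.absorb_up[of "1 - c" "1 - m" "1 - a"] c m be a by auto
          then have "U c a = a" using Dc[of a] by simp
          then have 2: "\<forall>x\<in>{a..<b}. U c x = min x c" using h ce be ab by force
          show ?thesis using 1 2 notc by blast
        qed
      next
        case ce: False
        have "\<forall>x\<in>{a..b}. U c x = min x c"
          using idem_low[of c] c ce be a by (auto simp: min.commute)
        then show ?thesis by auto
      qed
    qed
  qed
qed

end
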